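(* Let $V\in\mathbb{C}^{N\times N}$ be unitary and $b\in\mathbb{C}^N$ nonzero. Define, in exact arithmetic, the unitary Arnoldi process: $q_1=b/\|b\|_2$, $q_0=0$, $u_{01}=0$, and for $k=1,2,\dots,n$: $$v_k=Vq_k,\qquad u_{k-1,k}=-\frac{q_{k-1}^*v_k}{q_{k-1}^*v_{k-1}}\ (k>1),\qquad l_{kk}=q_k^*v_k+u_{k-1,k}\,q_k^*v_{k-1},$$ $$\tilde q_{k+1}=v_k-l_{kk}q_k+u_{k-1,k}v_{k-1},\qquad l_{k+1,k}=\|\tilde q_{k+1}\|_2,\qquad q_{k+1}=\tilde q_{k+1}/l_{k+1,k}$$ (with $v_0=0$). Assume that for $k=1,\dots,n$ no breakdown occurs, i.e. $l_{k+1,k}\neq0$ and $q_{k-1}^*v_{k-1}\neq0$ for $k>1$. Then for each $k\le n$: the vectors $q_1,\dots,q_{k+1}$ are orthonormal and $q_1,\dots,q_k$ span the Krylov subspace $\mathrm{span}\{b,Vb,\dots,V^{k-1}b\}$; with $Q_k=[q_1,\dots,q_k]$, $L_k$ the $k\times k$ lower bidiagonal matrix with diagonal entries $l_{jj}$ and subdiagonal entries $l_{j+1,j}$, $U_k$ the $k\times k$ upper bidiagonal matrix with unit diagonal and superdiagonal entries $u_{j-1,j}$, and $\hat L_k$ the $(k+1)\times k$ matrix obtained by appending the row $l_{k+1,k}e_k^T$ to $L_k$, one has $$VQ_kU_k=Q_kL_k+l_{k+1,k}q_{k+1}e_k^T=Q_{k+1}\hat L_k,$$ and the matrix $\hat L_kU_k^{-1}$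 has orthonormal columns.
   Context: $e_k$ denotes the $k$-th standard unit vector. All computations are in exact arithmetic. *)

theory Defs
  imports "Jordan_Normal_Form.Schur_Decomposition" "Jordan_Normal_Form.VS_Connect"
begin

text \<open>Conventions (JNF, 0-based indices internally).
  For complex vectors, \<open>w \<bullet>c x = \<Sum>i. w$i * cnj (x$i)\<close>, i.e. \<open>w \<bullet>c x = x\<^sup>* w\<close>.\<close>

definition vnorm2 :: "complex vec \<Rightarrow> real" where
  "vnorm2 x = sqrt (\<Sum>i<dim_vec x. (cmod (x $ i))\<^sup>2)"

definition unitary_mat :: "nat \<Rightarrow> complex mat \<Rightarrow> bool" where
  "unitary_mat N V \<longleftrightarrow> V \<in> carrier_mat N N \<and>
     mat_adjoint V * V = 1\<^sub>m N \<and> V * mat_adjoint V = 1\<^sub>m N"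

abbreviation cspan :: "nat \<Rightarrow> complex vec set \<Rightarrow> complex vec set" where
  "cspan N S \<equiv> LinearCombinations.module.span class_ring (module_vec TYPE(complex) N) S"

text \<open>One step of the unitary Arnoldi process at index k, given qp = q_(k-1), qc = q_k.
  ua = u_(k-1,k), la = l_(kk), qta = tilde q_(k+1).  Here v_j = V q_j, and v_0 = V q_0 = 0.\<close>
definition ua :: "complex mat \<Rightarrow> nat \<Rightarrow> complex vec \<Rightarrow> complex vec \<Rightarrow> complex" where
  "ua V k qp qc = (if k \<le> 1 then 0 else - (((V *\<^sub>v qc) \<bullet>c qp) / ((V *\<^sub>v qp) \<bullet>c qp)))"

definition la :: "complex mat \<Rightarrow> nat \<Rightarrow> complex vec \<Rightarrow> complex vec \<Rightarrow> complex" where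
  "la V k qp qc = (V *\<^sub>v qc) \<bullet>c qc + ua V k qp qc * ((V *\<^sub>v qp) \<bullet>c qc)"

definition qta :: "complex mat \<Rightarrow> nat \<Rightarrow> complex vec \<Rightarrow> complex vec \<Rightarrow> complex vec" where
  "qta V k qp qc = V *\<^sub>v qc - la V k qp qc \<cdot>\<^sub>v qc + ua V k qp qc \<cdot>\<^sub>v (V *\<^sub>v qp)"

fun arn_q :: "complex mat \<Rightarrow> complex vec \<Rightarrow> nat \<Rightarrow> complex vec" where
  "arn_q V b 0 = 0\<^sub>v (dim_vec b)"
| "arn_q V b (Suc 0) = complex_of_real (1 / vnorm2 b) \<cdot>\<^sub>v b"
| "arn_q V b (Suc (Suc k)) =
     (let qt = qta V (Suc k) (arn_q V b k) (arn_q V b (Suc k))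
      in complex_of_real (1 / vnorm2 qt) \<cdot>\<^sub>v qt)"

definition arn_v :: "complex mat \<Rightarrow> complex vec \<Rightarrow> nat \<Rightarrow> complex vec" where
  "arn_v V b j = V *\<^sub>v arn_q V b j"

definition arn_u :: "complex mat \<Rightarrow> complex vec \<Rightarrow> nat \<Rightarrow> complex" where
  "arn_u V b j = ua V j (arn_q V b (j - 1)) (arn_q V b j)"

definition arn_l :: "complex mat \<Rightarrow> complex vec \<Rightarrow> nat \<Rightarrow> complex" where
  "arn_l V b j = la V j (arn_q V b (j - 1)) (arn_q V b j)"

definition arn_ls :: "complex mat \<Rightarrow> complex vec \<Rightarrow> nat \<Rightarrow> real" where
  "arn_ls V b j = vnorm2 (qta V j (arn_q V b (j - 1)) (arn_q V b j))"

definition arn_Q :: "nat \<Rightarrow> complex mat \<Rightarrow> complex vec \<Rightarrow> nat \<Rightarrow> complex mat" where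
  "arn_Q N V b k = mat_of_cols N (map (arn_q V b) [1..<k+1])"

definition arn_L :: "complex mat \<Rightarrow> complex vec \<Rightarrow> nat \<Rightarrow> complex mat" where
  "arn_L V b k = mat k k (\<lambda>(i, j). if i = j then arn_l V b (j + 1)
                    else if i = j + 1 then complex_of_real (arn_ls V b (j + 1)) else 0)"

definition arn_Lhat :: "complex mat \<Rightarrow> complex vec \<Rightarrow> nat \<Rightarrow> complex mat" where
  "arn_Lhat V b k = mat (k + 1) k (\<lambda>(i, j). if i = j then arn_l V b (j + 1)
                    else if i = j + 1 then complex_of_real (arn_ls V b (j + 1)) else 0)"

definition arn_U :: "complex mat \<Rightarrow> complex vec \<Rightarrow> nat \<Rightarrow> complex mat" where
  "arn_U V b k = mat k k (\<lambda>(i, j). if i = j then 1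
                    else if j = i + 1 then arn_u V b (j + 1) else 0)"

end

theory Submission
  imports Defs
begin

lemma cmod_vs: "Module.module class_ring (module_vec TYPE(complex) N)"
proof -
  interpret vs: vec_space "TYPE(complex)" N .
  show ?thesis by unfold_locales
qed

lemma sp_carrier: "S \<subseteq> carrier_vec N \<Longrightarrow> cspan N S \<subseteq> carrier_vec N"
  using module.span_is_subset2[OF cmod_vs] by (auto simp: module_vec_simps)

lemma sp_mem: "S \<subseteq> carrier_vec N \<Longrightarrow> x \<in> S \<Longrightarrow> x \<in> cspan N S"
  using module.in_own_span[OF cmod_vs] by (auto simp: module_vec_simps)

lemma sp_sub: "S \<subseteq> carrier_vec N \<Longrightarrow> LinearCombinations.submodule class_ring (cspan N S) (module_vec TYPE(complex) N)"
  using module.span_is_submodule[OF cmod_vs] by (auto simp: module_vec_simps)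

lemma sp_add: "S \<subseteq> carrier_vec N \<Longrightarrow> x \<in> cspan N S \<Longrightarrow> y \<in> cspan N S \<Longrightarrow> x + y \<in> cspan N S"
  using sp_sub[of S N] unfolding submodule_def by (auto simp: module_vec_simps)

lemma sp_smult: "S \<subseteq> carrier_vec N \<Longrightarrow> x \<in> cspan N S \<Longrightarrow> c \<cdot>\<^sub>v x \<in> cspan N S"
  using sp_sub[of S N] unfolding submodule_def by (auto simp: module_vec_simps class_ring_simps)

lemma sp_zero: "S \<subseteq> carrier_vec N \<Longrightarrow> 0\<^sub>v N \<in> cspan N S"
  using sp_sub[of S N] unfolding submodule_def by (auto simp: module_vec_simps)

lemma sp_mono: "S \<subseteq> T \<Longrightarrow> cspan N S \<subseteq> cspan N T"
  using module.span_is_monotone[OF cmod_vs] by auto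

lemma sp_subset: "T \<subseteq> carrier_vec N \<Longrightarrow> S \<subseteq> cspan N T \<Longrightarrow> cspan N S \<subseteq> cspan N T"
  using module.span_is_subset[OF cmod_vs _ sp_sub] by auto

lemma sp_lin:
  assumes A: "A \<in> carrier_mat N N" and S: "S \<subseteq> carrier_vec N" and T: "T \<subseteq> carrier_vec N"
    and h: "\<And>s. s \<in> S \<Longrightarrow> A *\<^sub>v s \<in> cspan N T"
    and y: "y \<in> cspan N S"
  shows "A *\<^sub>v y \<in> cspan N T"
proof -
  let ?M = "{y \<in> carrier_vec N. A *\<^sub>v y \<in> cspan N T}"
  have "LinearCombinations.submodule class_ring ?M (module_vec TYPE(complex) N)"
    unfolding submodule_def
  proof (intro conjI allI impI)
    show "Module.module class_ring (module_vec TYPE(complex) N)" by (rule cmod_vs)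
    show "?M \<subseteq> carrier (module_vec TYPE(complex) N)" by (auto simp: module_vec_simps)
    fix v w assume "v \<in> ?M" "w \<in> ?M"
    then show "v \<oplus>\<^bsub>module_vec TYPE(complex) N\<^esub> w \<in> ?M"
      using A by (auto simp: module_vec_simps mult_add_distrib_mat_vec intro!: sp_add[OF T])
  next
    have z: "A *\<^sub>v 0\<^sub>v N = 0\<^sub>v N" using A by auto
    show "\<zero>\<^bsub>module_vec TYPE(complex) N\<^esub> \<in> ?M" using A sp_zero[OF T] z
      by (auto simp: module_vec_simps)
  next
    fix c :: complex and v assume "c \<in> carrier class_ring" "v \<in> ?M"
    then show "c \<odot>\<^bsub>module_vec TYPE(complex) N\<^esub> v \<in> ?M"
      using A by (auto simp: module_vec_simps mult_mat_vec intro!: sp_smult[OF T])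
  qed
  moreover have "S \<subseteq> ?M" using S h by auto
  ultimately have "cspan N S \<subseteq> ?M" using module.span_is_subset[OF cmod_vs] by blast
  then show ?thesis using y by auto
qed

lemma adj_carrier: "A \<in> carrier_mat m n \<Longrightarrow> mat_adjoint A \<in> carrier_mat n m"
  unfolding mat_adjoint_def by auto

lemma adj_index: "A \<in> carrier_mat m n \<Longrightarrow> i < n \<Longrightarrow> j < m \<Longrightarrow>
   mat_adjoint A $$ (i,j) = cnj (A $$ (j,i))"
  unfolding mat_adjoint_def by (auto simp: mat_of_rows_index)

lemma cprod_adj:
  fixes A :: "complex mat"
  assumes A: "A \<in> carrier_mat m n" and x: "x \<in> carrier_vec n" and y: "y \<in> carrier_vec m"
  shows "(A *\<^sub>v x) \<bullet>c y = x \<bullet>c (mat_adjoint A *\<^sub>v y)"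
proof -
  have "(A *\<^sub>v x) \<bullet>c y = (\<Sum>i<m. (\<Sum>j<n. A $$ (i,j) * x $ j) * cnj (y $ i))"
    using A x y by (auto simp: scalar_prod_def row_def atLeast0LessThan intro!: sum.cong)
  also have "... = (\<Sum>i<m. \<Sum>j<n. A $$ (i,j) * x $ j * cnj (y $ i))"
    by (simp add: sum_distrib_right)
  also have "... = (\<Sum>j<n. \<Sum>i<m. A $$ (i,j) * x $ j * cnj (y $ i))"
    by (rule sum.swap)
  also have "... = (\<Sum>j<n. x $ j * cnj (\<Sum>i<m. cnj (A $$ (i,j)) * y $ i))"
    by (simp add: sum_distrib_left mult_ac)
  also have "... = x \<bullet>c (mat_adjoint A *\<^sub>v y)"
    using A x y adj_carrier[OF A]
    by (auto simp: scalar_prod_def row_def atLeast0LessThan adj_index intro!: sum.cong)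
  finally show ?thesis .
qed

lemma ip_add_l: "x \<in> carrier_vec n \<Longrightarrow> y \<in> carrier_vec n \<Longrightarrow> z \<in> carrier_vec n \<Longrightarrow>
  (x + y) \<bullet>c z = x \<bullet>c z + y \<bullet>c (z :: complex vec)"
  by (rule add_scalar_prod_distrib) auto

lemma ip_smult_l: "x \<in> carrier_vec n \<Longrightarrow> z \<in> carrier_vec n \<Longrightarrow>
  (c \<cdot>\<^sub>v x) \<bullet>c z = c * (x \<bullet>c (z :: complex vec))"
  by (rule smult_scalar_prod_distrib) auto

lemma ip_smult_r: "x \<in> carrier_vec n \<Longrightarrow> z \<in> carrier_vec n \<Longrightarrow>
  x \<bullet>c (c \<cdot>\<^sub>v z) = cnj c * (x \<bullet>c (z :: complex vec))"
  by (simp add: conjugate_smult_vec scalar_prod_smult_distrib[of _ n])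

lemma ip_comp: "x \<in> carrier_vec n \<Longrightarrow> z \<in> carrier_vec n \<Longrightarrow>
  x \<bullet>c (z :: complex vec) = (\<Sum>i<n. x $ i * cnj (z $ i))"
  by (auto simp: scalar_prod_def atLeast0LessThan)

lemma ip_sym: "x \<in> carrier_vec n \<Longrightarrow> z \<in> carrier_vec n \<Longrightarrow>
  x \<bullet>c (z :: complex vec) = cnj (z \<bullet>c x)"
  by (simp add: ip_comp[of _ n] mult.commute)

lemma ip_zero_r: "x \<in> carrier_vec n \<Longrightarrow> x \<bullet>c (0\<^sub>v n :: complex vec) = 0"
  by (simp add: ip_comp[of _ n])

lemma ip_self: "x \<in> carrier_vec n \<Longrightarrow> x \<bullet>c (x :: complex vec) = complex_of_real ((vnorm2 x)\<^sup>2)"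
proof -
  assume x: "x \<in> carrier_vec n"
  have "x \<bullet>c x = (\<Sum>i<n. complex_of_real ((cmod (x $ i))\<^sup>2))"
    using x by (simp add: ip_comp[of _ n] complex_norm_square del: of_real_power)
  also have "... = complex_of_real (\<Sum>i<n. (cmod (x $ i))\<^sup>2)"
    by (rule of_real_sum[symmetric])
  also have "(\<Sum>i<n. (cmod (x $ i))\<^sup>2) = (vnorm2 x)\<^sup>2"
    unfolding vnorm2_def using x by (subst real_sqrt_pow2) (auto intro: sum_nonneg)
  finally show ?thesis .
qed

lemma vnorm2_nz: "x \<in> carrier_vec n \<Longrightarrow> x \<noteq> 0\<^sub>v n \<Longrightarrow> vnorm2 x \<noteq> 0"
proof
  assume x: "x \<in> carrier_vec n" and nz: "x \<noteq> 0\<^sub>v n" and v: "vnorm2 x = 0"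
  have "x \<bullet>c x = 0" using ip_self[OF x] v by simp
  then show False using conjugate_square_eq_0_vec[OF x] nz by simp
qed

lemma unitary_ip: assumes "unitary_mat N V" "x \<in> carrier_vec N" "y \<in> carrier_vec N"
  shows "(V *\<^sub>v x) \<bullet>c (V *\<^sub>v y) = x \<bullet>c y"
proof -
  have V: "V \<in> carrier_mat N N" and VV: "mat_adjoint V * V = 1\<^sub>m N"
    using assms(1) unfolding unitary_mat_def by auto
  have "(V *\<^sub>v x) \<bullet>c (V *\<^sub>v y) = x \<bullet>c (mat_adjoint V *\<^sub>v (V *\<^sub>v y))"
    using cprod_adj[OF V assms(2)] assms(3) V by auto
  also have "mat_adjoint V *\<^sub>v (V *\<^sub>v y) = y"
    using assoc_mult_mat_vec[OF adj_carrier[OF V] V assms(3), symmetric] VV assms(3) by simp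
  finally show ?thesis .
qed

lemma ip_add_r: "x \<in> carrier_vec n \<Longrightarrow> y \<in> carrier_vec n \<Longrightarrow> z \<in> carrier_vec n \<Longrightarrow>
  x \<bullet>c (y + z) = x \<bullet>c y + x \<bullet>c (z :: complex vec)"
  by (simp add: ip_comp[of _ n] sum.distrib distrib_left)

locale arn =
  fixes N n :: nat and V :: "complex mat" and b :: "complex vec"
  assumes unitary: "unitary_mat N V"
    and b: "b \<in> carrier_vec N" and b_nz: "b \<noteq> 0\<^sub>v N"
    and no_breakdown: "\<And>k. 1 \<le> k \<Longrightarrow> k \<le> n \<Longrightarrow>
        arn_ls V b k \<noteq> 0 \<and>
        (k > 1 \<longrightarrow> arn_v V b (k - 1) \<bullet>c arn_q V b (k - 1) \<noteq> 0)"
begin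

abbreviation "q \<equiv> arn_q V b"
abbreviation "s \<equiv> arn_ls V b"
abbreviation "l \<equiv> arn_l V b"
abbreviation "u \<equiv> arn_u V b"

lemma V: "V \<in> carrier_mat N N" using unitary unfolding unitary_mat_def by auto

lemma qta_carrier: "qp \<in> carrier_vec N \<Longrightarrow> qc \<in> carrier_vec N \<Longrightarrow> qta V k qp qc \<in> carrier_vec N"
  unfolding qta_def using V by auto

lemma q_carrier_aux: "q j \<in> carrier_vec N \<and> q (Suc j) \<in> carrier_vec N"
proof (induction j)
  case 0 then show ?case using b by auto
next
  case (Suc j) then show ?case using qta_carrier by (auto simp: Let_def)
qed

lemma q_carrier[simp]: "q j \<in> carrier_vec N" using q_carrier_aux by auto

lemma dim_q[simp]: "dim_vec (q j) = N" using q_carrier carrier_vecD by blast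

lemma q0: "q 0 = 0\<^sub>v N" using b by auto

lemma s_nz: "1 \<le> j \<Longrightarrow> j \<le> n \<Longrightarrow> s j \<noteq> 0" using no_breakdown by auto

lemma u1: "u 1 = 0" by (simp add: arn_u_def ua_def)

lemma q_Suc: "1 \<le> j \<Longrightarrow> q (Suc j) = complex_of_real (1 / s j) \<cdot>\<^sub>v qta V j (q (j-1)) (q j)"
  by (cases j) (auto simp: arn_ls_def Let_def)

lemma R_comp: assumes j: "1 \<le> j" "j \<le> n" and i: "i < N"
  shows "(V *\<^sub>v q j) $ i + u j * (V *\<^sub>v q (j-1)) $ i = l j * q j $ i + complex_of_real (s j) * q (Suc j) $ i"
proof -
  have qt: "qta V j (q(j-1)) (q j) $ i = (V *\<^sub>v q j) $ i - l j * q j $ i + u j * (V *\<^sub>v q (j-1)) $ i"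
    using V i by (simp add: qta_def arn_l_def arn_u_def)
  have "q (Suc j) $ i = complex_of_real (1 / s j) * qta V j (q(j-1)) (q j) $ i"
    using q_Suc[OF j(1)] i qta_carrier[of "q (j-1)" "q j" j] by simp
  then show ?thesis using qt s_nz[OF j] by (simp add: field_simps)
qed

lemma Vx_eq: "V *\<^sub>v (q j + c \<cdot>\<^sub>v q k) = V *\<^sub>v q j + c \<cdot>\<^sub>v (V *\<^sub>v q k)"
  using V by (simp add: mult_add_distrib_mat_vec[of V N N] mult_mat_vec)

lemma R_vec: assumes j: "1 \<le> j" "j \<le> n"
  shows "complex_of_real (s j) \<cdot>\<^sub>v q (Suc j) = V *\<^sub>v (q j + u j \<cdot>\<^sub>v q (j-1)) + (- l j) \<cdot>\<^sub>v q j"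
  unfolding Vx_eq
  by (rule eq_vecI) (use V R_comp[OF j] in \<open>auto simp: algebra_simps\<close>)

lemma Pinv: "1 \<le> i \<Longrightarrow> i \<le> n + 1 \<Longrightarrow> \<exists>d. \<forall>x\<in>carrier_vec N.
   (\<forall>j. 1 \<le> j \<longrightarrow> j < i \<longrightarrow> x \<bullet>c q j = 0) \<longrightarrow> (V *\<^sub>v x) \<bullet>c q i = d * ((V *\<^sub>v x) \<bullet>c q 1)"
proof (induction i)
  case 0 thus ?case by simp
next
  case (Suc i)
  show ?case
  proof (cases "i = 0")
    case True thus ?thesis by (intro exI[of _ 1]) auto
  next
    case False
    then have i1: "1 \<le> i" "i \<le> n" using Suc.prems by auto
    from Suc.IH i1 obtain d where d: "\<forall>x\<in>carrier_vec N. (\<forall>j. 1 \<le> j \<longrightarrow> j < i \<longrightarrow> x \<bullet>c q j = 0)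
       \<longrightarrow> (V *\<^sub>v x) \<bullet>c q i = d * ((V *\<^sub>v x) \<bullet>c q 1)" by auto
    let ?d = "- cnj (l i) * d / complex_of_real (s i)"
    show ?thesis
    proof (intro exI[of _ ?d] ballI impI)
      fix x assume x: "x \<in> carrier_vec N" and orth: "\<forall>j. 1 \<le> j \<longrightarrow> j < Suc i \<longrightarrow> x \<bullet>c q j = 0"
      have Vx: "V *\<^sub>v x \<in> carrier_vec N" using V x by auto
      have xqi: "x \<bullet>c q i = 0" using orth i1 by auto
      have xqi1: "x \<bullet>c q (i-1) = 0"
      proof (cases "i = 1")
        case True thus ?thesis using q0 x ip_zero_r by simp
      next
        case False thus ?thesis using orth i1 by auto
      qed
      have yc: "q i + u i \<cdot>\<^sub>v q (i-1) \<in> carrier_vec N" by auto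
      have e1: "(V *\<^sub>v x) \<bullet>c (V *\<^sub>v (q i + u i \<cdot>\<^sub>v q (i-1))) = 0"
        unfolding unitary_ip[OF unitary x yc]
        using x xqi xqi1 by (simp add: ip_add_r[of _ N] ip_smult_r[of _ N])
      have e2: "(V *\<^sub>v x) \<bullet>c q i = d * ((V *\<^sub>v x) \<bullet>c q 1)" using d x orth by auto
      have "complex_of_real (s i) * ((V *\<^sub>v x) \<bullet>c q (Suc i))
          = (V *\<^sub>v x) \<bullet>c (complex_of_real (s i) \<cdot>\<^sub>v q (Suc i))"
        using Vx by (simp add: ip_smult_r[of _ N])
      also have "... = (V *\<^sub>v x) \<bullet>c (V *\<^sub>v (q i + u i \<cdot>\<^sub>v q (i-1))) + cnj (- l i) * ((V *\<^sub>v x) \<bullet>c q i)"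
        unfolding R_vec[OF i1] using Vx V yc
        by (simp add: ip_add_r[of _ N] ip_smult_r[of _ N] del: mult_minus_left)
      also have "... = - cnj (l i) * d * ((V *\<^sub>v x) \<bullet>c q 1)" using e1 e2 by simp
      finally show "(V *\<^sub>v x) \<bullet>c q (Suc i) = ?d * ((V *\<^sub>v x) \<bullet>c q 1)"
        using s_nz[OF i1] by (simp add: field_simps)
    qed
  qed
qed

lemma normalize_ip: "x \<in> carrier_vec N \<Longrightarrow> vnorm2 x \<noteq> 0 \<Longrightarrow>
   (complex_of_real (1 / vnorm2 x) \<cdot>\<^sub>v x) \<bullet>c (complex_of_real (1 / vnorm2 x) \<cdot>\<^sub>v x) = 1"
proof -
  assume x: "x \<in> carrier_vec N" and nz: "vnorm2 x \<noteq> 0"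
  have "(complex_of_real (1 / vnorm2 x) \<cdot>\<^sub>v x) \<bullet>c (complex_of_real (1 / vnorm2 x) \<cdot>\<^sub>v x)
     = complex_of_real (1 / vnorm2 x) * cnj (complex_of_real (1 / vnorm2 x)) * (x \<bullet>c x)"
    using x by (simp add: ip_smult_l[of _ N] ip_smult_r[of _ N])
  also have "... = 1" unfolding ip_self[OF x] using nz
    by (simp add: power2_eq_square field_simps)
  finally show ?thesis .
qed

lemma q1_norm: "q 1 \<bullet>c q 1 = 1"
  using normalize_ip[OF b vnorm2_nz[OF b b_nz]] by simp

lemma qS_norm: "1 \<le> j \<Longrightarrow> j \<le> n \<Longrightarrow> q (Suc j) \<bullet>c q (Suc j) = 1"
  using normalize_ip[OF qta_carrier[of "q (j-1)" "q j" j]] s_nz q_Suc unfolding arn_ls_def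
  by simp

lemma Vxk_ip: "(V *\<^sub>v (q k + u k \<cdot>\<^sub>v q (k-1))) \<bullet>c w
   = (V *\<^sub>v q k) \<bullet>c w + u k * ((V *\<^sub>v q (k-1)) \<bullet>c w)" if "w \<in> carrier_vec N" for k w
  unfolding Vx_eq using V that by (simp add: ip_add_l[of _ N] ip_smult_l[of _ N])

lemma ON: "1 \<le> m \<Longrightarrow> m \<le> n + 1 \<Longrightarrow>
   \<forall>i\<in>{1..m}. \<forall>j\<in>{1..m}. q i \<bullet>c q j = (if i = j then 1 else 0)"
proof (induction m)
  case 0 thus ?case by simp
next
  case (Suc k)
  show ?case
  proof (cases "k = 0")
    case True thus ?thesis using q1_norm by auto
  next
    case False
    then have k1: "1 \<le> k" "k \<le> n" using Suc.prems by auto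
    have ONk: "\<And>i j. 1 \<le> i \<Longrightarrow> i \<le> k \<Longrightarrow> 1 \<le> j \<Longrightarrow> j \<le> k \<Longrightarrow>
        q i \<bullet>c q j = (if i = j then 1 else 0)"
      using Suc.IH k1 by auto
    let ?x = "q k + u k \<cdot>\<^sub>v q (k-1)"
    have xc: "?x \<in> carrier_vec N" by auto
    have A: "(V *\<^sub>v ?x) \<bullet>c q i = (if i = k then l k else 0)" if i: "1 \<le> i" "i \<le> k" for i
    proof (cases "i = k")
      case True thus ?thesis
        using Vxk_ip[of "q k" k] by (simp add: arn_l_def la_def arn_u_def)
    next
      case False
      then have k2: "k \<ge> 2" "i < k" using i by auto
      have a: "(V *\<^sub>v ?x) \<bullet>c q (k-1) = 0"
      proof -
        have "(V *\<^sub>v q (k-1)) \<bullet>c q (k-1) \<noteq> 0"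
          using no_breakdown[OF k1] k2 by (auto simp: arn_v_def)
        then show ?thesis using k2 Vxk_ip[of "q (k-1)" k]
          by (simp add: arn_u_def ua_def)
      qed
      have b': "?x \<bullet>c q j = 0" if "1 \<le> j" "j \<le> k - 2" for j
        using that k2 ONk[of k j] ONk[of "k-1" j]
        by (simp add: ip_add_l[of _ N] ip_smult_l[of _ N]) arith
      have h1: "1 \<le> k-1" "k-1 \<le> n+1" using k1 k2 by auto
      obtain d where d: "\<forall>x\<in>carrier_vec N. (\<forall>j. 1 \<le> j \<longrightarrow> j < k - 1 \<longrightarrow> x \<bullet>c q j = 0)
          \<longrightarrow> (V *\<^sub>v x) \<bullet>c q (k-1) = d * ((V *\<^sub>v x) \<bullet>c q 1)"
        using Pinv[OF h1] by blast
      have "(V *\<^sub>v q (k-1)) \<bullet>c q (k-1) = d * ((V *\<^sub>v q (k-1)) \<bullet>c q 1)"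
        using d ONk[of "k-1"] k2 by auto
      moreover have "(V *\<^sub>v q (k-1)) \<bullet>c q (k-1) \<noteq> 0"
        using no_breakdown[OF k1] k2 by (auto simp: arn_v_def)
      ultimately have dnz: "d \<noteq> 0" by auto
      have "(V *\<^sub>v ?x) \<bullet>c q (k-1) = d * ((V *\<^sub>v ?x) \<bullet>c q 1)"
        using d xc b' by auto
      with a dnz have c: "(V *\<^sub>v ?x) \<bullet>c q 1 = 0" by simp
      have h2: "1 \<le> i" "i \<le> n+1" using i k1 by auto
      obtain di where di: "\<forall>x\<in>carrier_vec N. (\<forall>j. 1 \<le> j \<longrightarrow> j < i \<longrightarrow> x \<bullet>c q j = 0)
          \<longrightarrow> (V *\<^sub>v x) \<bullet>c q i = di * ((V *\<^sub>v x) \<bullet>c q 1)"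
        using Pinv[OF h2] by blast
      have "(V *\<^sub>v ?x) \<bullet>c q i = di * ((V *\<^sub>v ?x) \<bullet>c q 1)"
        using di xc b' k2 by auto
      then show ?thesis using c False by simp
    qed
    have B: "q (Suc k) \<bullet>c q i = 0" if i: "1 \<le> i" "i \<le> k" for i
    proof -
      have "complex_of_real (s k) * (q (Suc k) \<bullet>c q i) = (complex_of_real (s k) \<cdot>\<^sub>v q (Suc k)) \<bullet>c q i"
        by (simp add: ip_smult_l[of _ N])
      also have "... = (V *\<^sub>v ?x) \<bullet>c q i + (- l k) * (q k \<bullet>c q i)"
        unfolding R_vec[OF k1] using V xc by (simp add: ip_add_l[of _ N] ip_smult_l[of _ N] del: mult_minus_left)
      also have "... = 0" using A[OF i] ONk[of k i] i k1 by auto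
      finally show ?thesis using s_nz[OF k1] by simp
    qed
    have C: "q i \<bullet>c q (Suc k) = 0" if i: "1 \<le> i" "i \<le> k" for i
      using B[OF i] ip_sym[of "q i" N "q (Suc k)"] by simp
    show ?thesis
    proof (intro ballI)
      fix i j assume i: "i \<in> {1..Suc k}" and j: "j \<in> {1..Suc k}"
      show "q i \<bullet>c q j = (if i = j then 1 else 0)"
        using i j ONk[of i j] B[of j] C[of i] qS_norm[OF k1]
        by (cases "i = Suc k"; cases "j = Suc k") auto
    qed
  qed
qed

abbreviation "Kry j \<equiv> ((\<lambda>x. V *\<^sub>v x) ^^ j) b"

lemma Kry_carrier[simp]: "Kry j \<in> carrier_vec N"
  by (induction j) (use b V in auto)

lemma Qs_carrier: "q ` A \<subseteq> carrier_vec N" by auto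
lemma Ks_carrier: "Kry ` A \<subseteq> carrier_vec N" by auto

lemma Vq_eq: assumes j: "1 \<le> j" "j \<le> n"
  shows "V *\<^sub>v q j = l j \<cdot>\<^sub>v q j + complex_of_real (s j) \<cdot>\<^sub>v q (Suc j) + (- u j) \<cdot>\<^sub>v (V *\<^sub>v q (j-1))"
  by (rule eq_vecI) (use V R_comp[OF j] in \<open>auto simp: algebra_simps\<close>)

lemma Vq_span: "1 \<le> i \<Longrightarrow> i \<le> n \<Longrightarrow> V *\<^sub>v q i \<in> cspan N (q ` {1..i+1})"
proof (induction i)
  case 0 thus ?case by simp
next
  case (Suc i)
  have sub: "q ` {1..Suc i + 1} \<subseteq> carrier_vec N" by auto
  have m1: "q (Suc i) \<in> cspan N (q ` {1..Suc i + 1})" by (rule sp_mem[OF sub]) auto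
  have m2: "q (Suc (Suc i)) \<in> cspan N (q ` {1..Suc i + 1})" by (rule sp_mem[OF sub], rule imageI) auto
  have m3: "V *\<^sub>v q i \<in> cspan N (q ` {1..Suc i + 1})"
  proof (cases "i = 0")
    case True
    have "V *\<^sub>v q i = 0\<^sub>v N" using True q0 V by auto
    then show ?thesis using sp_zero[OF sub] by simp
  next
    case False
    then have "V *\<^sub>v q i \<in> cspan N (q ` {1..i + 1})" using Suc by auto
    moreover have "cspan N (q ` {1..i + 1}) \<subseteq> cspan N (q ` {1..Suc i + 1})"
      by (rule sp_mono) auto
    ultimately show ?thesis by auto
  qed
  show ?case unfolding Vq_eq[OF Suc.prems]
    by (intro sp_add[OF sub] sp_smult[OF sub] m1 m2) (use m3 in simp)
qed

lemma span_eq: "1 \<le> k \<Longrightarrow> k \<le> n \<Longrightarrow> cspan N (q ` {1..k}) = cspan N (Kry ` {0..<k})"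
proof (induction k)
  case 0 thus ?case by simp
next
  case (Suc k)
  show ?case
  proof (cases "k = 0")
    case True
    have nb: "vnorm2 b \<noteq> 0" using vnorm2_nz[OF b b_nz] .
    have e1: "q 1 = complex_of_real (1 / vnorm2 b) \<cdot>\<^sub>v b" by simp
    have e2: "b = complex_of_real (vnorm2 b) \<cdot>\<^sub>v q 1"
      by (rule eq_vecI) (use nb b in auto)
    have s1: "q ` {1..Suc k} = {q 1}" "Kry ` {0..<Suc k} = {b}" using True by auto
    have A: "cspan N {q 1} \<subseteq> cspan N {b}"
    proof -
      have "complex_of_real (1 / vnorm2 b) \<cdot>\<^sub>v b \<in> cspan N {b}"
        using b by (intro sp_smult sp_mem) auto
      then have "q 1 \<in> cspan N {b}" by simp
      then show ?thesis using b by (intro sp_subset) auto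
    qed
    have "complex_of_real (vnorm2 b) \<cdot>\<^sub>v q 1 \<in> cspan N {q 1}"
      by (rule sp_smult[OF _ sp_mem]) (use b in auto)
    then have "b \<in> cspan N {q 1}" using e2 by (simp del: arn_q.simps)
    then have B: "cspan N {b} \<subseteq> cspan N {q 1}"
      by (intro sp_subset) (auto simp del: arn_q.simps)
    show ?thesis unfolding s1 using A B by auto
  next
    case False
    then have k1: "1 \<le> k" "k \<le> n" "Suc k \<le> n" using Suc.prems by auto
    have IH: "cspan N (q ` {1..k}) = cspan N (Kry ` {0..<k})" using Suc.IH k1 by auto
    have monoQ: "cspan N (q ` {1..k}) \<subseteq> cspan N (q ` {1..Suc k})" by (rule sp_mono) auto
    have monoK: "cspan N (Kry ` {0..<k}) \<subseteq> cspan N (Kry ` {0..<Suc k})" by (rule sp_mono) auto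
    have A: "Kry ` {0..<Suc k} \<subseteq> cspan N (q ` {1..Suc k})"
    proof
      fix y assume "y \<in> Kry ` {0..<Suc k}"
      then obtain j where j: "j < Suc k" "y = Kry j" by auto
      show "y \<in> cspan N (q ` {1..Suc k})"
      proof (cases "j < k")
        case True
        then have "y \<in> cspan N (Kry ` {0..<k})" using j sp_mem[OF Ks_carrier] by auto
        then show ?thesis using IH monoQ by auto
      next
        case False
        then have jk: "j = Suc (k - 1)" using j k1 by auto
        have y0: "y = Kry (Suc (k - 1))" using j jk by simp
        have "Kry (Suc (k - 1)) = V *\<^sub>v Kry (k - 1)" by simp
        with y0 have y: "y = V *\<^sub>v Kry (k - 1)" by simp
        have "Kry (k-1) \<in> cspan N (Kry ` {0..<k})" using k1 by (intro sp_mem[OF Ks_carrier]) auto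
        then have ym: "Kry (k-1) \<in> cspan N (q ` {1..k})" using IH by auto
        show ?thesis unfolding y
        proof (rule sp_lin[OF V Qs_carrier Qs_carrier _ ym])
          fix z assume "z \<in> q ` {1..k}"
          then obtain i where i: "1 \<le> i" "i \<le> k" "z = q i" by auto
          have "V *\<^sub>v q i \<in> cspan N (q ` {1..i+1})" using Vq_span i k1 by auto
          moreover have "cspan N (q ` {1..i+1}) \<subseteq> cspan N (q ` {1..Suc k})" using i by (intro sp_mono) auto
          ultimately show "V *\<^sub>v z \<in> cspan N (q ` {1..Suc k})" using i by auto
        qed
      qed
    qed
    have B: "q ` {1..Suc k} \<subseteq> cspan N (Kry ` {0..<Suc k})"
    proof
      fix y assume "y \<in> q ` {1..Suc k}"
      then obtain i where i: "1 \<le> i" "i \<le> Suc k" "y = q i" by auto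
      show "y \<in> cspan N (Kry ` {0..<Suc k})"
      proof (cases "i \<le> k")
        case True
        then have "y \<in> cspan N (q ` {1..k})" using i by (intro sp_mem[OF Qs_carrier]) auto
        then show ?thesis using IH monoK by auto
      next
        case False
        then have iS: "i = Suc k" using i by auto
        have qk: "q k \<in> cspan N (q ` {1..k})" using k1 by (intro sp_mem[OF Qs_carrier]) auto
        have qk1: "q (k-1) \<in> cspan N (q ` {1..k})"
        proof (cases "k = 1")
          case True
          then have "q (k-1) = 0\<^sub>v N" using q0 by simp
          then show ?thesis by (simp only:) (rule sp_zero[OF Qs_carrier])
        next
          case False then show ?thesis using k1 by (intro sp_mem[OF Qs_carrier]) auto
        qed
        have xm: "q k + u k \<cdot>\<^sub>v q (k-1) \<in> cspan N (Kry ` {0..<k})"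
          unfolding IH[symmetric] by (intro sp_add[OF Qs_carrier] sp_smult[OF Qs_carrier] qk qk1)
        have Vxm: "V *\<^sub>v (q k + u k \<cdot>\<^sub>v q (k-1)) \<in> cspan N (Kry ` {0..<Suc k})"
        proof (rule sp_lin[OF V Ks_carrier Ks_carrier _ xm])
          fix z assume "z \<in> Kry ` {0..<k}"
          then obtain j where j: "j < k" "z = Kry j" by auto
          have "V *\<^sub>v z = Kry (Suc j)" using j by simp
          moreover have "Kry (Suc j) \<in> Kry ` {0..<Suc k}" using j by (intro imageI) auto
          ultimately show "V *\<^sub>v z \<in> cspan N (Kry ` {0..<Suc k})"
            using sp_mem[OF Ks_carrier] by metis
        qed
        have qkK: "q k \<in> cspan N (Kry ` {0..<Suc k})" using qk IH monoK by auto
        have "complex_of_real (s k) \<cdot>\<^sub>v q (Suc k) \<in> cspan N (Kry ` {0..<Suc k})"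
          unfolding R_vec[OF k1(1,2)]
          by (intro sp_add[OF Ks_carrier] sp_smult[OF Ks_carrier] Vxm qkK)
        then have "complex_of_real (1 / s k) \<cdot>\<^sub>v (complex_of_real (s k) \<cdot>\<^sub>v q (Suc k)) \<in> cspan N (Kry ` {0..<Suc k})"
          by (rule sp_smult[OF Ks_carrier])
        moreover have "complex_of_real (1 / s k) \<cdot>\<^sub>v (complex_of_real (s k) \<cdot>\<^sub>v q (Suc k)) = q (Suc k)"
          by (rule eq_vecI) (use s_nz[OF k1(1,2)] in auto)
        ultimately show ?thesis using iS i by simp
      qed
    qed
    show ?thesis
      using sp_subset[OF Qs_carrier A] sp_subset[OF Ks_carrier B] by auto
  qed
qed

lemma sum_lower: fixes g :: "nat \<Rightarrow> complex"
  assumes c: "c < K"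
  shows "(\<Sum>t<K. g t * (if t = c then a else if t = c + 1 then a' else 0))
    = g c * a + (if c + 1 < K then g (c+1) * a' else 0)"
proof -
  have "(\<Sum>t<K. g t * (if t = c then a else if t = c + 1 then a' else 0))
     = (\<Sum>t<K. (if t = c then g c * a else 0) + (if t = c + 1 then g (c+1) * a' else 0))"
    by (intro sum.cong) auto
  also have "... = g c * a + (if c + 1 < K then g (c+1) * a' else 0)"
    using c by (simp add: sum.distrib)
  finally show ?thesis .
qed

lemma sum_upper: fixes g :: "nat \<Rightarrow> complex"
  assumes c: "c < K"
  shows "(\<Sum>t<K. g t * (if t = c then 1 else if c = t + 1 then w else 0))
    = g c + (if 0 < c then w * g (c - 1) else 0)"
proof -
  have "(\<Sum>t<K. g t * (if t = c then 1 else if c = t + 1 then w else 0))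
     = (\<Sum>t<K. (if t = c then g c else 0) + (if 0 < c \<and> t = c - 1 then w * g (c - 1) else 0))"
    by (intro sum.cong) auto
  also have "... = g c + (if 0 < c then w * g (c - 1) else 0)"
    using c by (simp add: sum.distrib)
  finally show ?thesis .
qed

lemma mult_idx: "A \<in> carrier_mat m p \<Longrightarrow> B \<in> carrier_mat p r \<Longrightarrow> i < m \<Longrightarrow> j < r \<Longrightarrow>
  (A * B) $$ (i,j) = (\<Sum>t<p. A $$ (i,t) * B $$ (t,j))"
  by (auto simp: scalar_prod_def atLeast0LessThan intro!: sum.cong)

lemma Q_carrier: "arn_Q N V b k \<in> carrier_mat N k"
  unfolding arn_Q_def by (metis length_map length_upt add_diff_cancel_right' mat_of_cols_carrier(1))

lemma nthQ: "c < k \<Longrightarrow> map q [1..<k+1] ! c = q (Suc c)"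
  by (simp del: upt_Suc)

lemma Q_idx: "r < N \<Longrightarrow> c < k \<Longrightarrow> arn_Q N V b k $$ (r,c) = q (Suc c) $ r"
  unfolding arn_Q_def by (simp add: mat_of_cols_index nthQ del: upt_Suc)

lemma col_Q: "c < k \<Longrightarrow> col (arn_Q N V b k) c = q (Suc c)"
  unfolding arn_Q_def by (subst col_mat_of_cols) (auto simp: nthQ simp del: upt_Suc)

lemma U_carrier: "arn_U V b k \<in> carrier_mat k k" unfolding arn_U_def by auto
lemma L_carrier: "arn_L V b k \<in> carrier_mat k k" unfolding arn_L_def by auto
lemma Lhat_carrier: "arn_Lhat V b k \<in> carrier_mat (k+1) k" unfolding arn_Lhat_def by auto

lemma VQ_idx: "r < N \<Longrightarrow> c < k \<Longrightarrow> (V * arn_Q N V b k) $$ (r,c) = (V *\<^sub>v q (Suc c)) $ r"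
  using V Q_carrier[of k] by (simp add: col_Q)

lemma VQU: assumes k: "1 \<le> k" "k \<le> n"
  shows "V * arn_Q N V b k * arn_U V b k = arn_Q N V b (k + 1) * arn_Lhat V b k"
proof (rule eq_matI)
  fix r c assume r: "r < dim_row (arn_Q N V b (k + 1) * arn_Lhat V b k)"
    and c: "c < dim_col (arn_Q N V b (k + 1) * arn_Lhat V b k)"
  then have r: "r < N" and c: "c < k" using Q_carrier[of "k+1"] Lhat_carrier[of k] by auto
  have VQc: "V * arn_Q N V b k \<in> carrier_mat N k" using V Q_carrier by auto
  have "(V * arn_Q N V b k * arn_U V b k) $$ (r,c)
     = (\<Sum>t<k. (V *\<^sub>v q (Suc t)) $ r * (if t = c then 1 else if c = t + 1 then u (c+1) else 0))"
    using mult_idx[OF VQc U_carrier r c] r c VQ_idx[OF r] by (simp add: arn_U_def)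
  also have "... = (V *\<^sub>v q (Suc c)) $ r + (if 0 < c then u (c+1) * (V *\<^sub>v q (Suc (c - 1))) $ r else 0)"
    by (rule sum_upper[OF c])
  also have "... = (V *\<^sub>v q (Suc c)) $ r + u (Suc c) * (V *\<^sub>v q (Suc c - 1)) $ r"
    by (cases c) (auto simp: arn_u_def ua_def)
  also have "... = l (Suc c) * q (Suc c) $ r + complex_of_real (s (Suc c)) * q (Suc (Suc c)) $ r"
    using R_comp[of "Suc c" r] c k r by auto
  also have "... = (\<Sum>t<k+1. q (Suc t) $ r * (if t = c then l (c+1) else if t = c + 1 then complex_of_real (s (c+1)) else 0))"
    using sum_lower[of c "k+1" "\<lambda>t. q (Suc t) $ r" "l (c+1)" "complex_of_real (s (c+1))"] c
    by (simp add: mult.commute del: arn_q.simps sum.lessThan_Suc)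
  also have "... = (arn_Q N V b (k + 1) * arn_Lhat V b k) $$ (r,c)"
    using mult_idx[OF Q_carrier Lhat_carrier r c] r c Q_idx[OF r] by (simp add: arn_Lhat_def)
  finally show "(V * arn_Q N V b k * arn_U V b k) $$ (r,c) = (arn_Q N V b (k + 1) * arn_Lhat V b k) $$ (r,c)" .
next
  show "dim_row (V * arn_Q N V b k * arn_U V b k) = dim_row (arn_Q N V b (k + 1) * arn_Lhat V b k)"
    using V Q_carrier[of k] Q_carrier[of "k+1"] by simp
  show "dim_col (V * arn_Q N V b k * arn_U V b k) = dim_col (arn_Q N V b (k + 1) * arn_Lhat V b k)"
    using U_carrier[of k] Lhat_carrier[of k] by simp
qed

lemma QL: assumes k: "1 \<le> k"
  shows "arn_Q N V b k * arn_L V b k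
         + complex_of_real (s k) \<cdot>\<^sub>m
             (mat_of_cols N [q (k + 1)] * mat_of_rows k [unit_vec k (k - 1)])
       = arn_Q N V b (k + 1) * arn_Lhat V b k"
proof (rule eq_matI)
  fix r c assume r: "r < dim_row (arn_Q N V b (k + 1) * arn_Lhat V b k)"
    and c: "c < dim_col (arn_Q N V b (k + 1) * arn_Lhat V b k)"
  then have r: "r < N" and c: "c < k" using Q_carrier[of "k+1"] Lhat_carrier[of k] by auto
  have C1: "mat_of_cols N [q (k + 1)] \<in> carrier_mat N 1"
    using mat_of_cols_carrier(1)[of N "[q (k + 1)]"] by (simp del: arn_q.simps)
  have C2: "mat_of_rows k [unit_vec k (k - 1)] \<in> carrier_mat 1 k"
    using mat_of_rows_carrier(1)[of k "[unit_vec k (k - 1)]"] by simp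
  have M: "(mat_of_cols N [q (k + 1)] * mat_of_rows k [unit_vec k (k - 1)]) $$ (r,c)
      = q (k+1) $ r * (if c = k - 1 then 1 else 0)"
    using mult_idx[OF C1 C2 r c] r c k by (simp add: mat_of_cols_index mat_of_rows_index del: arn_q.simps)
  have L: "(arn_Q N V b k * arn_L V b k) $$ (r,c)
     = (\<Sum>t<k. q (Suc t) $ r * (if t = c then l (c+1) else if t = c + 1 then complex_of_real (s (c+1)) else 0))"
    using mult_idx[OF Q_carrier L_carrier r c] r c Q_idx[OF r] by (simp add: arn_L_def del: arn_q.simps)
  have R: "(arn_Q N V b (k + 1) * arn_Lhat V b k) $$ (r,c)
     = (\<Sum>t<k+1. q (Suc t) $ r * (if t = c then l (c+1) else if t = c + 1 then complex_of_real (s (c+1)) else 0))"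
    using mult_idx[OF Q_carrier Lhat_carrier r c] r c Q_idx[OF r]
    by (simp add: arn_Lhat_def del: arn_q.simps sum.lessThan_Suc)
  have L2: "(arn_Q N V b k * arn_L V b k) $$ (r,c) = q (Suc c) $ r * l (c+1)
       + (if c + 1 < k then q (Suc (c+1)) $ r * complex_of_real (s (c+1)) else 0)"
    unfolding L by (rule sum_lower[OF c])
  have R2: "(arn_Q N V b (k + 1) * arn_Lhat V b k) $$ (r,c) = q (Suc c) $ r * l (c+1)
       + q (Suc (c+1)) $ r * complex_of_real (s (c+1))"
    unfolding R using sum_lower[of c "k+1" "\<lambda>t. q (Suc t) $ r" "l (c+1)" "complex_of_real (s (c+1))"] c
    by (simp del: arn_q.simps sum.lessThan_Suc)
  have CM: "mat_of_cols N [q (k + 1)] * mat_of_rows k [unit_vec k (k - 1)] \<in> carrier_mat N k"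
    using C1 C2 by auto
  have "(arn_Q N V b k * arn_L V b k + complex_of_real (s k) \<cdot>\<^sub>m
             (mat_of_cols N [q (k + 1)] * mat_of_rows k [unit_vec k (k - 1)])) $$ (r,c)
     = (arn_Q N V b k * arn_L V b k) $$ (r,c) + complex_of_real (s k) * q (k+1) $ r * (if c = k - 1 then 1 else 0)"
    using CM r c M by simp
  also have "... = (arn_Q N V b (k + 1) * arn_Lhat V b k) $$ (r,c)"
  proof (cases "c + 1 < k")
    case True thus ?thesis by (simp only: L2 R2) (simp del: arn_q.simps)
  next
    case False
    have h: "c = k - 1" "Suc (c + 1) = k + 1" "c + 1 = k" using c False by auto
    show ?thesis by (simp only: L2 R2) (use h False in \<open>simp del: arn_q.simps\<close>)
  qed
  finally show "(arn_Q N V b k * arn_L V b k + complex_of_real (s k) \<cdot>\<^sub>m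
             (mat_of_cols N [q (k + 1)] * mat_of_rows k [unit_vec k (k - 1)])) $$ (r,c)
     = (arn_Q N V b (k + 1) * arn_Lhat V b k) $$ (r,c)" .
next
  show "dim_row (arn_Q N V b k * arn_L V b k + complex_of_real (s k) \<cdot>\<^sub>m
             (mat_of_cols N [q (k + 1)] * mat_of_rows k [unit_vec k (k - 1)])) = dim_row (arn_Q N V b (k + 1) * arn_Lhat V b k)"
    using Q_carrier[of k] Q_carrier[of "k+1"] by simp
  show "dim_col (arn_Q N V b k * arn_L V b k + complex_of_real (s k) \<cdot>\<^sub>m
             (mat_of_cols N [q (k + 1)] * mat_of_rows k [unit_vec k (k - 1)])) = dim_col (arn_Q N V b (k + 1) * arn_Lhat V b k)"
    using L_carrier[of k] Lhat_carrier[of k] by simp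
qed

lemma U_inv: "\<exists>W \<in> carrier_mat k k. arn_U V b k * W = 1\<^sub>m k \<and> W * arn_U V b k = 1\<^sub>m k"
proof -
  have ut: "upper_triangular (arn_U V b k)" unfolding upper_triangular_def arn_U_def by auto
  have "det (arn_U V b k) = prod_list (diag_mat (arn_U V b k))"
    by (rule det_upper_triangular[OF ut U_carrier])
  also have "... = prod_list (map (\<lambda>i. 1) [0..<k])"
    unfolding diag_mat_def arn_U_def by (intro arg_cong[where f = prod_list] map_cong) auto
  also have "... = 1" by (induction k) auto
  finally have "det (arn_U V b k) \<noteq> 0" by simp
  from det_non_zero_imp_unit[OF U_carrier this, of "()"]
  show ?thesis unfolding Units_def ring_mat_def by auto
qed

lemma U_invertible: "invertible_mat (arn_U V b k)"
  using U_inv[of k] U_carrier[of k] unfolding invertible_mat_def inverts_mat_def square_mat.simps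
  by (metis carrier_matD(1,2))

lemma QadjQ: assumes k: "k \<le> n"
  shows "mat_adjoint (arn_Q N V b (k+1)) * arn_Q N V b (k+1) = 1\<^sub>m (k+1)"
proof (rule eq_matI)
  have ON': "\<forall>i\<in>{1..k+1}. \<forall>j\<in>{1..k+1}. q i \<bullet>c q j = (if i = j then 1 else 0)"
    using ON[of "k+1"] k by auto
  fix i j assume i: "i < dim_row (1\<^sub>m (k+1) :: complex mat)" and j: "j < dim_col (1\<^sub>m (k+1) :: complex mat)"
  then have i: "i < k+1" and j: "j < k+1" by auto
  have "(mat_adjoint (arn_Q N V b (k+1)) * arn_Q N V b (k+1)) $$ (i,j)
      = (\<Sum>t<N. mat_adjoint (arn_Q N V b (k+1)) $$ (i, t) * arn_Q N V b (k+1) $$ (t, j))"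
    by (rule mult_idx[OF adj_carrier[OF Q_carrier[of "k+1"]] Q_carrier[of "k+1"] i j])
  also have "... = (\<Sum>r<N. cnj (q (Suc i) $ r) * q (Suc j) $ r)"
  proof (intro sum.cong refl)
    fix x assume "x \<in> {..<N}" then have x: "x < N" by simp
    have "mat_adjoint (arn_Q N V b (k+1)) $$ (i,x) = cnj (arn_Q N V b (k+1) $$ (x,i))"
      by (rule adj_index[OF Q_carrier[of "k+1"] i x])
    moreover have "arn_Q N V b (k+1) $$ (x,i) = q (Suc i) $ x" by (rule Q_idx[OF x i])
    moreover have "arn_Q N V b (k+1) $$ (x,j) = q (Suc j) $ x" by (rule Q_idx[OF x j])
    ultimately show "mat_adjoint (arn_Q N V b (k+1)) $$ (i, x) * arn_Q N V b (k+1) $$ (x, j)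
       = cnj (q (Suc i) $ x) * q (Suc j) $ x" by (simp del: arn_q.simps)
  qed
  also have "... = q (Suc j) \<bullet>c q (Suc i)"
    by (simp add: ip_comp[of _ N] mult.commute del: arn_q.simps)
  also have "... = 1\<^sub>m (k+1) $$ (i,j)" using ON' i j by auto
  finally show "(mat_adjoint (arn_Q N V b (k+1)) * arn_Q N V b (k+1)) $$ (i,j) = 1\<^sub>m (k+1) $$ (i,j)" .
qed (use adj_carrier[OF Q_carrier] Q_carrier in auto)

lemma Q_isom: assumes k: "k \<le> n" and a: "a \<in> carrier_vec (k+1)" and c: "c \<in> carrier_vec (k+1)"
  shows "(arn_Q N V b (k+1) *\<^sub>v a) \<bullet>c (arn_Q N V b (k+1) *\<^sub>v c) = a \<bullet>c c"
proof -
  have "(arn_Q N V b (k+1) *\<^sub>v a) \<bullet>c (arn_Q N V b (k+1) *\<^sub>v c)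
     = a \<bullet>c (mat_adjoint (arn_Q N V b (k+1)) *\<^sub>v (arn_Q N V b (k+1) *\<^sub>v c))"
    using cprod_adj[OF Q_carrier[of "k+1"] a] c Q_carrier[of "k+1"] by auto
  also have "mat_adjoint (arn_Q N V b (k+1)) *\<^sub>v (arn_Q N V b (k+1) *\<^sub>v c) = c"
    using assoc_mult_mat_vec[OF adj_carrier[OF Q_carrier[of "k+1"]] Q_carrier[of "k+1"] c, symmetric] QadjQ[OF k] c by simp
  finally show ?thesis .
qed

lemma final_orth: assumes k: "1 \<le> k" "k \<le> n" and W: "W \<in> carrier_mat k k"
  and inv: "arn_U V b k * W = 1\<^sub>m k"
  shows "mat_adjoint (arn_Lhat V b k * W) * (arn_Lhat V b k * W) = 1\<^sub>m k"
proof -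
  let ?Q = "arn_Q N V b (k+1)" and ?M = "arn_Lhat V b k * W"
  have M: "?M \<in> carrier_mat (k+1) k" using Lhat_carrier[of k] W by auto
  have QM: "?Q * ?M = V * arn_Q N V b k"
  proof -
    have "?Q * ?M = (?Q * arn_Lhat V b k) * W"
      by (rule assoc_mult_mat[OF Q_carrier[of "k+1"] Lhat_carrier[of k] W, symmetric])
    also have "... = (V * arn_Q N V b k * arn_U V b k) * W" using VQU[OF k] by simp
    also have "... = (V * arn_Q N V b k) * (arn_U V b k * W)"
      using V Q_carrier U_carrier W by (meson assoc_mult_mat mult_carrier_mat)
    also have "... = V * arn_Q N V b k" using inv V Q_carrier[of k] by simp
    finally show ?thesis .
  qed
  show ?thesis
  proof (rule eq_matI)
    fix i j assume i: "i < dim_row (1\<^sub>m k :: complex mat)" and j: "j < dim_col (1\<^sub>m k :: complex mat)"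
    then have i: "i < k" and j: "j < k" by auto
    have cj: "col ?M j \<in> carrier_vec (k+1)" by (rule col_carrier_vec[OF j M])
    have ci: "col ?M i \<in> carrier_vec (k+1)" by (rule col_carrier_vec[OF i M])
    have QMc: "?Q * ?M \<in> carrier_mat N k" using Q_carrier[of "k+1"] M by (rule mult_carrier_mat)
    have "(mat_adjoint ?M * ?M) $$ (i,j) = (\<Sum>r<k+1. cnj (?M $$ (r,i)) * ?M $$ (r,j))"
      using mult_idx[OF adj_carrier[OF M] M i j] by (simp add: adj_index[OF M] i j)
    also have "... = (\<Sum>r<k+1. col ?M j $ r * cnj (col ?M i $ r))"
      by (intro sum.cong refl) (use carrier_matD[OF M] i j in \<open>auto simp: mult.commute simp del: sum.lessThan_Suc\<close>)
    also have "... = col ?M j \<bullet>c col ?M i"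
      by (rule ip_comp[symmetric, OF cj ci])
    also have "... = (?Q *\<^sub>v col ?M j) \<bullet>c (?Q *\<^sub>v col ?M i)"
      by (rule Q_isom[OF k(2) cj ci, symmetric])
    also have "... = col (?Q * ?M) j \<bullet>c col (?Q * ?M) i"
      using col_mult2[OF Q_carrier[of "k+1"] M i] col_mult2[OF Q_carrier[of "k+1"] M j] by simp
    also have "... = (V *\<^sub>v q (Suc j)) \<bullet>c (V *\<^sub>v q (Suc i))"
      unfolding QM using col_mult2[OF V Q_carrier[of k] i] col_mult2[OF V Q_carrier[of k] j]
        col_Q[OF i] col_Q[OF j] by (simp del: arn_q.simps)
    also have "... = q (Suc j) \<bullet>c q (Suc i)" by (rule unitary_ip[OF unitary]) auto
    also have "... = 1\<^sub>m k $$ (i,j)"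
      using ON[of "k+1"] k i j by auto
    finally show "(mat_adjoint ?M * ?M) $$ (i,j) = 1\<^sub>m k $$ (i,j)" .
  qed (use adj_carrier[OF M] M in auto)
qed

end

theorem proposition2:
  fixes N n :: nat and V :: "complex mat" and b :: "complex vec"
  assumes unitary: "unitary_mat N V"
    and b: "b \<in> carrier_vec N" and b_nz: "b \<noteq> 0\<^sub>v N"
    and no_breakdown: "\<And>k. 1 \<le> k \<Longrightarrow> k \<le> n \<Longrightarrow>
        arn_ls V b k \<noteq> 0 \<and>
        (k > 1 \<longrightarrow> arn_v V b (k - 1) \<bullet>c arn_q V b (k - 1) \<noteq> 0)"
  shows "\<forall>k. 1 \<le> k \<and> k \<le> n \<longrightarrow>
     (\<forall>i\<in>{1..k+1}. \<forall>j\<in>{1..k+1}.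
         arn_q V b i \<bullet>c arn_q V b j = (if i = j then 1 else 0))
   \<and> cspan N (arn_q V b ` {1..k}) = cspan N ((\<lambda>j. ((\<lambda>x. V *\<^sub>v x) ^^ j) b) ` {0..<k})
   \<and> V * arn_Q N V b k * arn_U V b k
       = arn_Q N V b k * arn_L V b k
         + complex_of_real (arn_ls V b k) \<cdot>\<^sub>m
             (mat_of_cols N [arn_q V b (k + 1)] * mat_of_rows k [unit_vec k (k - 1)])
   \<and> arn_Q N V b k * arn_L V b k
         + complex_of_real (arn_ls V b k) \<cdot>\<^sub>m
             (mat_of_cols N [arn_q V b (k + 1)] * mat_of_rows k [unit_vec k (k - 1)])
       = arn_Q N V b (k + 1) * arn_Lhat V b k
   \<and> invertible_mat (arn_U V b k)
   \<and> (\<forall>W \<in> carrier_mat k k. inverts_mat (arn_U V b k) W \<longrightarrow>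
        mat_adjoint (arn_Lhat V b k * W) * (arn_Lhat V b k * W) = 1\<^sub>m k)"
proof -
  interpret A: arn N n V b by (rule arn.intro[OF unitary b b_nz no_breakdown])
  show ?thesis
  proof (intro allI impI conjI ballI)
    fix k assume k: "1 \<le> k \<and> k \<le> n"
    then have k1: "1 \<le> k" and k2: "k \<le> n" by auto
    fix i j assume "i \<in> {1..k+1}" "j \<in> {1..k+1}"
    then show "arn_q V b i \<bullet>c arn_q V b j = (if i = j then 1 else 0)"
      using A.ON[of "k+1"] k by auto
  next
    fix k assume k: "1 \<le> k \<and> k \<le> n"
    then show "cspan N (arn_q V b ` {1..k}) = cspan N ((\<lambda>j. ((\<lambda>x. V *\<^sub>v x) ^^ j) b) ` {0..<k})"
      using A.span_eq by auto
  next
    fix k assume k: "1 \<le> k \<and> k \<le> n"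
    then show "V * arn_Q N V b k * arn_U V b k
       = arn_Q N V b k * arn_L V b k
         + complex_of_real (arn_ls V b k) \<cdot>\<^sub>m
             (mat_of_cols N [arn_q V b (k + 1)] * mat_of_rows k [unit_vec k (k - 1)])"
      using A.VQU[of k] A.QL[of k] by auto
  next
    fix k assume k: "1 \<le> k \<and> k \<le> n"
    then show "arn_Q N V b k * arn_L V b k
         + complex_of_real (arn_ls V b k) \<cdot>\<^sub>m
             (mat_of_cols N [arn_q V b (k + 1)] * mat_of_rows k [unit_vec k (k - 1)])
       = arn_Q N V b (k + 1) * arn_Lhat V b k"
      using A.QL[of k] by auto
  next
    fix k show "invertible_mat (arn_U V b k)" by (rule A.U_invertible)
  next
    fix k W assume k: "1 \<le> k \<and> k \<le> n" and W: "W \<in> carrier_mat k k"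
      and inv: "inverts_mat (arn_U V b k) W"
    have "arn_U V b k * W = 1\<^sub>m k"
      using inv A.U_carrier[of k] unfolding inverts_mat_def by auto
    then show "mat_adjoint (arn_Lhat V b k * W) * (arn_Lhat V b k * W) = 1\<^sub>m k"
      using A.final_orth[of k W] k W by auto
  qed
qed

end
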